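(* Let $n\ge 2$, $c=(c_1,\dots,c_n)^T$ with $c_k>0$ for all $k$, $e=(1,\dots,1)^T\in\mathbb{R}^n$, $D=\mathrm{diag}\{c_1^{-2},\dots,c_n^{-2}\}$. Let $\mathcal{E_D}=\{x\in\mathbb{R}^n:\sum_{k=1}^n (x_k-c_k)^2/c_k^2\le 1\}$ be the Dikin ellipsoid and $\mathcal{H}=\{x\in\mathbb{R}^n: e^Tx=e^Tc\}$. Define $$Q=D+\frac{n-1}{(e^Tc)^2}ee^T-\frac{1}{e^Tc}(ec^TD+Dce^T)=D+\sum_{i=1}^n\sum_{j=1}^n\left(\frac{n-1}{(e^Tc)^2}-\frac{1}{e^Tc}\left(\frac{1}{c_i}+\frac{1}{c_j}\right)\right)E_{ij}.$$ Then the Lorenz cone with vertex at the origin and base $\mathcal{H}\cap\mathcal{E_D}$, together with its reflection through the origin, is represented by $Q$: $$\{x\in\mathbb{R}^n: x^TQx\le 0\}=\{\lambda y:\ \lambda\in\mathbb{R},\ y\in\mathcal{H}\cap\mathcal{E_D}\}.$$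
   Context: $E_{ij}$ denotes the $n\times n$ matrix whose $(i,j)$ entry is $1$ and all other entries are $0$. *)

theory Defs
  imports "HOL-Analysis.Analysis"
begin

definition ones :: "real^'n" where
  "ones = (\<chi> i. 1)"

definition outer :: "real^'n \<Rightarrow> real^'n \<Rightarrow> real^'n^'n" where
  "outer u v = (\<chi> i j. u $ i * v $ j)"

definition dikinD :: "real^'n \<Rightarrow> real^'n^'n" where
  "dikinD c = (\<chi> i j. if i = j then 1 / (c $ i)^2 else 0)"

definition dikin_ellipsoid :: "real^'n \<Rightarrow> (real^'n) set" where
  "dikin_ellipsoid c = {x. (\<Sum>k\<in>UNIV. (x $ k - c $ k)^2 / (c $ k)^2) \<le> 1}"

definition hyperplaneH :: "real^'n \<Rightarrow> (real^'n) set" where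
  "hyperplaneH c = {x. ones \<bullet> x = ones \<bullet> c}"

definition lorenzQ :: "real^'n \<Rightarrow> real^'n^'n" where
  "lorenzQ c = dikinD c
     + ((real CARD('n) - 1) / (ones \<bullet> c)^2) *\<^sub>R outer ones ones
     - (1 / (ones \<bullet> c)) *\<^sub>R (outer ones (transpose (dikinD c) *v c) + outer (dikinD c *v c) ones)"

end

theory Submission
  imports Defs
begin

lemma Dc: assumes "\<And>k. c $ k > (0::real)"
  shows "dikinD c *v c = (\<chi> i. 1 / c $ i)" "transpose (dikinD c) *v c = (\<chi> i. 1 / c $ i)"
proof -
  have *: "dikinD c *v c = (\<chi> i. 1 / c $ i)"
    unfolding dikinD_def matrix_vector_mult_def
    using assms by (auto simp: vec_eq_iff power2_eq_square if_distrib[of "\<lambda>a. a * _"] sum.delta cong: if_cong)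
  have "transpose (dikinD c) = dikinD c"
    unfolding dikinD_def transpose_def by (auto simp: vec_eq_iff)
  with * show "dikinD c *v c = (\<chi> i. 1 / c $ i)" "transpose (dikinD c) *v c = (\<chi> i. 1 / c $ i)" by auto
qed

lemma Qx: fixes x :: "real^'n" assumes "\<And>k. c $ k > (0::real)"
  shows "lorenzQ c *v x = (\<chi> i. x$i / (c$i)^2 + (real CARD('n) - 1) / (ones \<bullet> c)^2 * sum (\<lambda>j. x$j) UNIV
     - (1 / (ones \<bullet> c)) * (sum (\<lambda>j. x$j / c$j) UNIV + sum (\<lambda>j. x$j) UNIV / c$i))"
  unfolding lorenzQ_def Dc[OF assms]
  apply (simp add: vec_eq_iff matrix_vector_mult_def dikinD_def outer_def ones_def
      sum.distrib sum_subtractf sum_distrib_left sum_divide_distrib algebra_simps if_distrib[of "\<lambda>a. a * _"] sum.delta cong: if_cong)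
  apply (simp add: if_distrib[of "\<lambda>a. _ * a"] sum.delta sum_subtractf sum_distrib_right[symmetric] sum_divide_distrib[symmetric] cong: if_cong)
  done


lemma ones_inner: "ones \<bullet> (x::real^'n) = sum (\<lambda>i. x$i) UNIV"
  by (simp add: ones_def inner_vec_def)

lemma qform: fixes x :: "real^'n" assumes "\<And>k. c $ k > (0::real)"
  shows "x \<bullet> (lorenzQ c *v x) = (\<Sum>i\<in>UNIV. (x$i/c$i)^2)
     + (real CARD('n) - 1) / (ones \<bullet> c)^2 * (sum (\<lambda>j. x$j) UNIV)^2
     - 2 / (ones \<bullet> c) * sum (\<lambda>j. x$j) UNIV * sum (\<lambda>j. x$j / c$j) UNIV"
proof -
  define s where "s = ones \<bullet> c"
  define \<sigma> where "\<sigma> = sum (\<lambda>j. x$j) UNIV"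
  define \<tau> where "\<tau> = sum (\<lambda>j. x$j / c$j) UNIV"
  have "x \<bullet> (lorenzQ c *v x) = (\<Sum>i\<in>UNIV. x$i * (x$i / (c$i)^2 + (real CARD('n) - 1) / s^2 * \<sigma>
     - (1 / s) * (\<tau> + \<sigma> / c$i)))"
    unfolding Qx[OF assms] inner_vec_def s_def \<sigma>_def \<tau>_def by simp
  also have "\<dots> = (\<Sum>i\<in>UNIV. (x$i/c$i)^2 + ((real CARD('n) - 1) / s^2 * \<sigma> - \<tau> / s) * x$i
     - (\<sigma>/s) * (x$i / c$i))"
    by (rule sum.cong) (simp_all add: algebra_simps power2_eq_square)
  also have "\<dots> = (\<Sum>i\<in>UNIV. (x$i/c$i)^2) + ((real CARD('n) - 1) / s^2 * \<sigma> - \<tau> / s) * \<sigma>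
     - (\<sigma>/s) * \<tau>"
    unfolding sum.distrib sum_subtractf sum_distrib_left[symmetric] sum_distrib_right[symmetric]
      \<sigma>_def[symmetric] \<tau>_def[symmetric] ..
  finally show ?thesis unfolding s_def \<sigma>_def \<tau>_def by (simp add: power2_eq_square algebra_simps)
qed


lemma qscale: "(t *\<^sub>R y) \<bullet> (A *v (t *\<^sub>R (y::real^'n))) = t^2 * (y \<bullet> (A *v y))"
  by (simp add: matrix_vector_mult_scaleR power2_eq_square)

lemma ell: fixes y :: "real^'n" assumes "\<And>k. c $ k > (0::real)" and "ones \<bullet> y = ones \<bullet> c"
  shows "(\<Sum>k\<in>UNIV. (y $ k - c $ k)^2 / (c $ k)^2) = y \<bullet> (lorenzQ c *v y) + 1"
proof -
  define s where "s = ones \<bullet> c"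
  have sp: "s > 0" unfolding s_def ones_inner using assms(1)
    by (simp add: sum_pos)
  have ys: "sum (\<lambda>j. y$j) UNIV = s" using assms(2) unfolding s_def ones_inner by simp
  have "(\<Sum>k\<in>UNIV. (y $ k - c $ k)^2 / (c $ k)^2) = (\<Sum>k\<in>UNIV. (y$k/c$k)^2 - 2 * (y$k/c$k) + 1)"
  proof (rule sum.cong)
    fix k
    have ne: "c$k \<noteq> 0" using assms(1)[of k] by simp
    have "(y $ k - c $ k)^2 / (c $ k)^2 = ((y $ k - c $ k) / c $ k)^2" by (simp add: power_divide)
    also have "(y $ k - c $ k) / c $ k = y$k/c$k - 1" using ne by (simp add: diff_divide_distrib)
    finally show "(y $ k - c $ k)^2 / (c $ k)^2 = (y$k/c$k)^2 - 2 * (y$k/c$k) + 1"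
      by (simp add: power2_diff)
  qed simp
  also have "\<dots> = (\<Sum>k\<in>UNIV. (y$k/c$k)^2) - 2 * (\<Sum>k\<in>UNIV. y$k/c$k) + real CARD('n)"
    by (simp add: sum.distrib sum_subtractf sum_distrib_left)
  also have "\<dots> = y \<bullet> (lorenzQ c *v y) + 1"
    unfolding qform[OF assms(1)] s_def[symmetric] ys using sp by (simp add: power2_eq_square field_simps)
  finally show ?thesis .
qed

theorem mainTheorem7:
  fixes c :: "real^'n"
  assumes "CARD('n) \<ge> 2"
    and "\<And>k. c $ k > 0"
  shows "{x :: real^'n. x \<bullet> (lorenzQ c *v x) \<le> 0}
       = {t *\<^sub>R y | t y. y \<in> hyperplaneH c \<inter> dikin_ellipsoid c}"
proof -
  define s where "s = ones \<bullet> c"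
  have sp: "s > 0" unfolding s_def ones_inner using assms(2)
    by (simp add: sum_pos)
  have memiff: "y \<in> hyperplaneH c \<inter> dikin_ellipsoid c \<longleftrightarrow> ones \<bullet> y = ones \<bullet> c \<and> y \<bullet> (lorenzQ c *v y) \<le> 0" for y
    unfolding hyperplaneH_def dikin_ellipsoid_def using ell[OF assms(2), of y] by auto
  show ?thesis
  proof (intro set_eqI iffI)
    fix x assume "x \<in> {t *\<^sub>R y | t y. y \<in> hyperplaneH c \<inter> dikin_ellipsoid c}"
    then obtain t y where x: "x = t *\<^sub>R y" and y: "y \<in> hyperplaneH c \<inter> dikin_ellipsoid c" by auto
    have "y \<bullet> (lorenzQ c *v y) \<le> 0" using y memiff by auto
    then have "t^2 * (y \<bullet> (lorenzQ c *v y)) \<le> 0" by (simp add: mult_nonneg_nonpos)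
    then show "x \<in> {x. x \<bullet> (lorenzQ c *v x) \<le> 0}" by (simp only: x qscale mem_Collect_eq)
  next
    fix x assume "x \<in> {x :: real^'n. x \<bullet> (lorenzQ c *v x) \<le> 0}"
    then have q: "x \<bullet> (lorenzQ c *v x) \<le> 0" by simp
    define \<sigma> where "\<sigma> = sum (\<lambda>j. x$j) UNIV"
    show "x \<in> {t *\<^sub>R y | t y. y \<in> hyperplaneH c \<inter> dikin_ellipsoid c}"
    proof (cases "\<sigma> = 0")
      case True
      have "(\<Sum>i\<in>UNIV. (x$i/c$i)^2) \<le> 0" using q True unfolding qform[OF assms(2)] \<sigma>_def[symmetric] by simp
      have "\<forall>i\<in>UNIV. (x$i/c$i)^2 = 0"
      proof -
        have h: "(\<Sum>i\<in>UNIV. (x$i/c$i)^2) \<le> 0" by fact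
        have "(\<Sum>i\<in>UNIV. (x$i/c$i)^2) \<ge> 0" by (rule sum_nonneg) simp
        with h have "(\<Sum>i\<in>UNIV. (x$i/c$i)^2) = 0" by simp
        then show ?thesis by (subst (asm) sum_nonneg_eq_0_iff) auto
      qed
      then have "x = 0 *\<^sub>R c" using assms(2) by (auto simp: vec_eq_iff) (metis less_irrefl)
      moreover have "c \<in> hyperplaneH c \<inter> dikin_ellipsoid c"
        unfolding hyperplaneH_def dikin_ellipsoid_def by simp
      ultimately show ?thesis by blast
    next
      case False
      define y where "y = (s / \<sigma>) *\<^sub>R x"
      have xy: "x = (\<sigma> / s) *\<^sub>R y" unfolding y_def using False sp by simp
      have "ones \<bullet> y = ones \<bullet> c" unfolding y_def inner_scaleR_right s_def[symmetric]
        using False by (simp add: ones_inner \<sigma>_def[symmetric])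
      moreover have "y \<bullet> (lorenzQ c *v y) \<le> 0" unfolding y_def qscale using q
        by (simp add: mult_nonneg_nonpos)
      ultimately have "y \<in> hyperplaneH c \<inter> dikin_ellipsoid c" using memiff by auto
      then show ?thesis using xy by blast
    qed
  qed
qed

end
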